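(* Let $q$ be a prime, $n\ge 1$, and let $f:\mathbb{Z}_q^n\to\mathbb{C}$ be any function. Then $$\sum_{k=0}^n\frac{\widehat{A}_k[f]}{(q-1)^k\binom{n}{k}}=\frac{(n+1)(q-1)}{q^{1+n/2}}\sum_{m=0}^n\frac{A_m[f]}{m+1}\left(1-\frac{(-1)^{m+1}}{(q-1)^{m+1}}\right).$$
   Context: For $x=(x_1,\dots,x_n)\in\mathbb{Z}_q^n$ (identified with $GF(q)^n$), the weight ${\rm wt}(x)$ is the number of nonzero coordinates. The inner product is $(x,z)=\sum_i x_iz_i \bmod q$. The Fourier transform of $f$ is $\widehat{f}(z)=q^{-n/2}\sum_{x\in\mathbb{Z}_q^n}f(x)\,\omega^{(x,z)}$ with $\omega=e^{2\pi i/q}$. Define $A_k[f]=\sum_{z:\,{\rm wt}(z)=k}f(z)$ and $\widehat{A}_k[f]=\sum_{z:\,{\rm wt}(z)=k}\widehat{f}(z)$. *)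

theory Defs
  imports "HOL-Analysis.Analysis"
begin

text \<open>Z_q^n is modelled as functions nat \<Rightarrow> nat with values in {0..<q} on
  indices {0..<n} and the default value 0 outside.\<close>

definition vecs :: "nat \<Rightarrow> nat \<Rightarrow> (nat \<Rightarrow> nat) set" where
  "vecs q n = PiE {0..<n} (\<lambda>_. {0..<q})"

definition wt :: "nat \<Rightarrow> (nat \<Rightarrow> nat) \<Rightarrow> nat" where
  "wt n x = card {i \<in> {0..<n}. x i \<noteq> 0}"

definition inner_q :: "nat \<Rightarrow> nat \<Rightarrow> (nat \<Rightarrow> nat) \<Rightarrow> (nat \<Rightarrow> nat) \<Rightarrow> nat" where
  "inner_q q n x z = (\<Sum>i<n. x i * z i) mod q"

definition omega :: "nat \<Rightarrow> complex" where
  "omega q = exp (2 * of_real pi * \<i> / of_nat q)"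

definition fourier :: "nat \<Rightarrow> nat \<Rightarrow> ((nat \<Rightarrow> nat) \<Rightarrow> complex) \<Rightarrow> (nat \<Rightarrow> nat) \<Rightarrow> complex" where
  "fourier q n f z = of_real (real q powr (- real n / 2)) *
     (\<Sum>x\<in>vecs q n. f x * omega q ^ inner_q q n x z)"

definition A_k :: "nat \<Rightarrow> nat \<Rightarrow> ((nat \<Rightarrow> nat) \<Rightarrow> complex) \<Rightarrow> nat \<Rightarrow> complex" where
  "A_k q n f k = (\<Sum>z\<in>{z \<in> vecs q n. wt n z = k}. f z)"

definition Ahat_k :: "nat \<Rightarrow> nat \<Rightarrow> ((nat \<Rightarrow> nat) \<Rightarrow> complex) \<Rightarrow> nat \<Rightarrow> complex" where
  "Ahat_k q n f k = A_k q n (fourier q n f) k"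

end

theory Submission
  imports Defs
begin

lemma beta_nat:
  assumes "k \<le> n"
  shows "((\<lambda>t::real. t^k * (1-t)^(n-k)) has_integral 1/((real n+1) * real (n choose k))) {0..1}"
proof -
  have B: "((\<lambda>t. t powr (real (k+1) - 1) * (1 - t) powr (real (n-k+1) - 1)) has_integral Beta (real (k+1)) (real (n-k+1))) {0<..<1}"
    using has_integral_Beta_real[of "real (k+1)" "real (n-k+1)"] by (simp add: has_integral_Icc_iff_Ioo)
  have g1: "Gamma (real (k+1)) = fact k" using Gamma_fact[where 'a=real, of k] by (simp add: add.commute)
  have g2: "Gamma (real (n-k+1)) = fact (n-k)" using Gamma_fact[where 'a=real, of "n-k"] by (simp add: add.commute)
  have g3: "Gamma (real (k+1) + real (n-k+1)) = fact (n+1)" using Gamma_fact[where 'a=real, of "n+1"] assms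
    by (simp add: add.commute of_nat_diff)
  have "Beta (real (k+1)) (real (n-k+1)) = fact k * fact (n-k) / fact (n+1)"
    unfolding Beta_def g1 g2 g3 by simp
  also have "\<dots> = 1/((real n+1) * real (n choose k))"
    using assms by (simp add: binomial_fact field_simps)
  finally have B2: "((\<lambda>t. t powr (real (k+1) - 1) * (1 - t) powr (real (n-k+1) - 1)) has_integral 1/((real n+1) * real (n choose k))) {0<..<1}"
    using B by simp
  have "((\<lambda>t::real. t^k * (1-t)^(n-k)) has_integral 1/((real n+1) * real (n choose k))) {0<..<1}"
    by (rule has_integral_eq[OF _ B2]) (auto simp: powr_realpow)
  then show ?thesis by (simp add: has_integral_Icc_iff_Ioo)
qed

lemma poly_int:
  fixes b :: real and m :: nat
  assumes "b \<noteq> 0"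
  shows "((\<lambda>t. (1 - b*t)^m) has_integral (1 - (1-b)^(m+1))/(b*(real m+1))) {0..1}"
proof -
  define c where "c = -(1/b) * (1/(real m+1))"
  define F where "F = (\<lambda>t. c * (1 - b*t)^(m+1))"
  have "((\<lambda>t. (1 - b*t)^m) has_integral (F 1 - F 0)) {0..1}"
  proof (rule fundamental_theorem_of_calculus)
    fix x :: real assume "x \<in> {0..1}"
    have "((\<lambda>t. (1-b*t)^(m+1)) has_real_derivative (real (m+1) * (1-b*x)^m * (-b))) (at x within {0..1})"
      by (rule derivative_eq_intros refl | simp)+
    then have "(F has_real_derivative c * (real (m+1) * (1-b*x)^m * (-b))) (at x within {0..1})"
      unfolding F_def by (rule DERIV_cmult)
    moreover have "c * (real (m+1) * (1-b*x)^m * (-b)) = (1-b*x)^m"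
    proof -
      have "c * (real (m+1) * (1-b*x)^m * (-b)) = ((1/b)*b) * ((1/(real m+1)) * real (m+1)) * (1-b*x)^m"
        unfolding c_def by (simp only: mult_ac mult_minus_left mult_minus_right minus_minus)
      also have "\<dots> = (1-b*x)^m" using assms by (simp add: add.commute)
      finally show ?thesis .
    qed
    ultimately show "(F has_vector_derivative (1-b*x)^m) (at x within {0..1})"
      by (simp add: has_real_derivative_iff_has_vector_derivative)
  qed simp
  moreover have "F 1 - F 0 = (1 - (1-b)^(m+1))/(b*(real m+1))"
    unfolding F_def c_def by (simp add: algebra_simps diff_divide_distrib add_divide_distrib)
  ultimately show ?thesis by simp
qed

lemma omega_pow_ne1:
  assumes "0 < a" "a < q"
  shows "omega q ^ a \<noteq> 1"
proof
  assume h: "omega q ^ a = 1"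
  have "omega q ^ a = exp (of_nat a * (2 * of_real pi * \<i> / of_nat q))"
    unfolding omega_def by (rule exp_of_nat_mult[symmetric])
  with h have "exp (of_nat a * (2 * of_real pi * \<i> / of_nat q)) = 1" by simp
  then obtain n :: int where n: "Im (of_nat a * (2 * of_real pi * \<i> / of_nat q)) = of_int (2*n) * pi"
    unfolding exp_eq_1 by blast
  have "of_nat a * (2 * of_real pi * \<i> / of_nat q) = \<i> * complex_of_real (2 * pi * a / q)"
    by simp
  then have "Im (of_nat a * (2 * of_real pi * \<i> / of_nat q)) = 2 * pi * a / q"
    by (simp only:) simp
  with n have "2 * pi * a / q = 2 * n * pi" by simp
  then have "real a = real q * n" using assms by (simp add: field_simps)
  then have "int a = int q * n" by (metis of_int_eq_iff of_int_mult of_int_of_nat_eq)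
  show False
  proof (cases "n \<ge> 1")
    case True
    then have "int q * n \<ge> int q * 1" by (intro mult_left_mono) auto
    with \<open>int a = int q * n\<close> assms show False by simp
  next
    case False
    then have "n \<le> 0" by simp
    then have "int q * n \<le> 0" by (simp add: mult_nonneg_nonpos)
    with \<open>int a = int q * n\<close> assms show False by simp
  qed
qed

lemma omega_pow_q: "q > 0 \<Longrightarrow> omega q ^ q = 1"
proof -
  assume "q > 0"
  have "omega q ^ q = exp (of_nat q * (2 * of_real pi * \<i> / of_nat q))"
    unfolding omega_def by (rule exp_of_nat_mult[symmetric])
  also have "of_nat q * (2 * of_real pi * \<i> / of_nat q) = 2 * of_real pi * \<i>"
    using \<open>q > 0\<close> by simp
  finally show ?thesis by simp
qed

lemma omega_mod: "q > 0 \<Longrightarrow> omega q ^ (s mod q) = omega q ^ s"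
proof -
  assume q: "q > 0"
  have "omega q ^ s = omega q ^ (q * (s div q) + s mod q)" by simp
  also have "\<dots> = (omega q ^ q) ^ (s div q) * omega q ^ (s mod q)"
    by (simp only: power_add power_mult)
  finally show ?thesis using omega_pow_q[OF q] by simp
qed

lemma char_sum:
  assumes "0 < a" "a < q"
  shows "(\<Sum>b\<in>{1..<q}. omega q ^ (a*b)) = -1"
proof -
  let ?w = "omega q ^ a"
  have wq: "?w ^ q = 1"
    using omega_pow_q[of q] assms by (simp only: power_mult[symmetric] mult.commute[of a]) (simp add: power_mult)
  have "(\<Sum>b<q. ?w ^ b) = 0"
    using omega_pow_ne1[OF assms] wq by (simp add: sum_gp_strict)
  moreover have "{..<q} = insert 0 {1..<q}" using assms by auto
  ultimately have "1 + (\<Sum>b\<in>{1..<q}. ?w ^ b) = 0" by simp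
  moreover have "(\<Sum>b\<in>{1..<q}. omega q ^ (a*b)) = (\<Sum>b\<in>{1..<q}. ?w ^ b)"
    by (simp only: power_mult)
  ultimately show ?thesis by (simp add: eq_neg_iff_add_eq_0 add.commute)
qed

lemma prod_wt:
  fixes a c :: "'a::comm_monoid_mult"
  shows "(\<Prod>i\<in>{0..<n}. if z i = 0 then a else c) = c ^ wt n z * a ^ (n - wt n z)"
proof -
  have "(\<Prod>i\<in>{0..<n}. if z i = 0 then a else c) =
        (\<Prod>i\<in>{0..<n} \<inter> {i. z i = 0}. a) * (\<Prod>i\<in>{0..<n} \<inter> - {i. z i = 0}. c)"
    by (rule prod.If_cases) simp
  also have "{0..<n} \<inter> - {i. z i = 0} = {i \<in> {0..<n}. z i \<noteq> 0}" by auto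
  also have "{0..<n} \<inter> {i. z i = 0} = {0..<n} - {i \<in> {0..<n}. z i \<noteq> 0}" by auto
  finally have e: "(\<Prod>i\<in>{0..<n}. if z i = 0 then a else c) =
      (\<Prod>i\<in>{0..<n} - {i \<in> {0..<n}. z i \<noteq> 0}. a) * (\<Prod>i\<in>{i \<in> {0..<n}. z i \<noteq> 0}. c)" .
  have "card ({0..<n} - {i \<in> {0..<n}. z i \<noteq> 0}) = n - wt n z"
    unfolding wt_def by (subst card_Diff_subset) auto
  then show ?thesis unfolding e by (simp add: wt_def mult.commute)
qed

lemma wt_le: "wt n z \<le> n"
  unfolding wt_def by (rule order.trans[OF card_mono[of "{0..<n}"]]) auto

lemma coord_sum:
  assumes "a < q" "q \<ge> 2"
  shows "(\<Sum>b\<in>{0..<q}. omega q ^ (a*b) * complex_of_real (if b = 0 then 1 - t else t / real (q-1))) =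
         (if a = 0 then 1 else complex_of_real (1 - (real q / real (q-1)) * t))"
proof -
  have r: "real (q-1) \<noteq> 0" using assms by simp
  have split: "{0..<q} = insert 0 {1..<q}" using assms by auto
  have "(\<Sum>b\<in>{0..<q}. omega q ^ (a*b) * complex_of_real (if b = 0 then 1 - t else t / real (q-1))) =
        complex_of_real (1 - t) + (\<Sum>b\<in>{1..<q}. omega q ^ (a*b)) * complex_of_real (t / real (q-1))"
    unfolding split
    apply (subst sum.insert)
      apply simp
     apply simp
    apply (simp only: sum_distrib_right)
    apply simp
    done
  also have "\<dots> = (if a = 0 then 1 else complex_of_real (1 - (real q / real (q-1)) * t))"
  proof (cases "a = 0")
    case True
    have "complex_of_real (1 - t) + of_nat (q - 1) * complex_of_real (t / real (q-1)) = complex_of_real (1 - t + real (q-1) * (t / real (q-1)))"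
      by simp
    also have "1 - t + real (q-1) * (t / real (q-1)) = 1" using r by simp
    finally show ?thesis using True assms by simp
  next
    case False
    then have S: "(\<Sum>b\<in>{1..<q}. omega q ^ (a*b)) = -1" using char_sum[of a q] assms by simp
    have E: "1 - t - t / real (q-1) = 1 - (real q / real (q-1)) * t"
      using r assms by (simp add: field_simps of_nat_diff)
    have "complex_of_real (1 - t) + (\<Sum>b\<in>{1..<q}. omega q ^ (a*b)) * complex_of_real (t / real (q-1))
          = complex_of_real (1 - t) + (-1) * complex_of_real (t / real (q-1))" by (simp only: S)
    also have "\<dots> = complex_of_real (1 - t - t / real (q-1))"
      by (simp only: of_real_diff mult_minus1 diff_conv_add_uminus of_real_add of_real_minus)
    also have "\<dots> = complex_of_real (1 - (real q / real (q-1)) * t)" by (simp only: E)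
    finally show ?thesis using False by simp
  qed
  finally show ?thesis .
qed

lemma pointwise:
  assumes q: "q \<ge> 2" and x: "x \<in> vecs q n"
  shows "(\<Sum>z\<in>vecs q n. omega q ^ inner_q q n x z *
            complex_of_real ((t / real (q-1))^wt n z * (1-t)^(n - wt n z))) =
         complex_of_real ((1 - (real q / real (q-1)) * t) ^ wt n x)"
proof -
  define h where "h = (\<lambda>b::nat. if b = 0 then 1 - t else t / real (q-1))"
  define F where "F = (\<lambda>i b. omega q ^ (x i * b) * complex_of_real (h b))"
  have tm: "omega q ^ inner_q q n x z *
            complex_of_real ((t / real (q-1))^wt n z * (1-t)^(n - wt n z)) =
            (\<Prod>i\<in>{0..<n}. F i (z i))" for z
  proof -
    have "omega q ^ inner_q q n x z = (\<Prod>i\<in>{0..<n}. omega q ^ (x i * z i))"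
      unfolding inner_q_def using q by (simp add: omega_mod power_sum atLeast0LessThan)
    moreover have "(t / real (q-1))^wt n z * (1-t)^(n - wt n z) = (\<Prod>i\<in>{0..<n}. h (z i))"
      unfolding h_def by (rule prod_wt[symmetric])
    ultimately show ?thesis unfolding F_def by (simp add: prod.distrib)
  qed
  have "(\<Sum>z\<in>vecs q n. omega q ^ inner_q q n x z *
            complex_of_real ((t / real (q-1))^wt n z * (1-t)^(n - wt n z))) =
        (\<Sum>z\<in>PiE {0..<n} (\<lambda>_. {0..<q}). \<Prod>i\<in>{0..<n}. F i (z i))"
    unfolding vecs_def tm ..
  also have "\<dots> = (\<Prod>i\<in>{0..<n}. \<Sum>b\<in>{0..<q}. F i b)"
    by (rule prod_sum_PiE[symmetric]) auto
  also have "\<dots> = (\<Prod>i\<in>{0..<n}. if x i = 0 then 1 else complex_of_real (1 - (real q / real (q-1)) * t))"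
  proof (rule prod.cong[OF refl])
    fix i assume "i \<in> {0..<n}"
    then have "x i < q" using x unfolding vecs_def by (auto simp: PiE_iff)
    then show "(\<Sum>b\<in>{0..<q}. F i b) = (if x i = 0 then 1 else complex_of_real (1 - (real q / real (q-1)) * t))"
      unfolding F_def h_def using coord_sum[of "x i" q t] q by simp
  qed
  also have "\<dots> = complex_of_real ((1 - (real q / real (q-1)) * t) ^ wt n x)"
    by (simp add: prod_wt)
  finally show ?thesis .
qed

lemma kernel:
  assumes q: "q \<ge> 2" and x: "x \<in> vecs q n"
  shows "(\<Sum>z\<in>vecs q n. omega q ^ inner_q q n x z *
            complex_of_real (1 / (real (q-1) ^ wt n z * real (n choose wt n z)))) =
         complex_of_real ((real n + 1) * ((1 - (1 - real q / real (q-1)) ^ (wt n x + 1)) /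
                    ((real q / real (q-1)) * (real (wt n x) + 1))))"
proof -
  define r where "r = real (q-1)"
  define b where "b = real q / r"
  define m where "m = wt n x"
  have r0: "r \<noteq> 0" using q unfolding r_def by simp
  have b0: "b \<noteq> 0" using q r0 unfolding b_def by simp
  define I where "I = (\<lambda>z. (1 / ((real n + 1) * real (n choose wt n z)) * (1 / r ^ wt n z)) *\<^sub>R omega q ^ inner_q q n x z)"
  have each: "((\<lambda>t. ((t / r)^wt n z * (1-t)^(n - wt n z)) *\<^sub>R omega q ^ inner_q q n x z) has_integral I z) {0..1}"
    for z
  proof -
    have "((\<lambda>t::real. t^wt n z * (1-t)^(n - wt n z)) has_integral 1/((real n+1) * real (n choose wt n z))) {0..1}"
      by (rule beta_nat[OF wt_le])
    then have "((\<lambda>t::real. t^wt n z * (1-t)^(n - wt n z) * (1 / r ^ wt n z)) has_integral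
                 1/((real n+1) * real (n choose wt n z)) * (1 / r ^ wt n z)) {0..1}"
      by (rule has_integral_mult_left)
    then have "((\<lambda>t::real. (t / r)^wt n z * (1-t)^(n - wt n z)) has_integral
                 1/((real n+1) * real (n choose wt n z)) * (1 / r ^ wt n z)) {0..1}"
      by (simp add: power_divide)
    then show ?thesis unfolding I_def by (rule has_integral_scaleR_left)
  qed
  have S: "((\<lambda>t. \<Sum>z\<in>vecs q n. ((t / r)^wt n z * (1-t)^(n - wt n z)) *\<^sub>R omega q ^ inner_q q n x z)
            has_integral (\<Sum>z\<in>vecs q n. I z)) {0..1}"
    by (rule has_integral_sum) (auto simp: vecs_def finite_PiE each)
  have pw: "(\<Sum>z\<in>vecs q n. ((t / r)^wt n z * (1-t)^(n - wt n z)) *\<^sub>R omega q ^ inner_q q n x z) =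
            ((1 - b * t) ^ m) *\<^sub>R 1" for t
    using pointwise[OF q x, of t] unfolding r_def b_def m_def
    by (simp add: scaleR_conv_of_real mult.commute)
  have P: "((\<lambda>t. ((1 - b * t) ^ m) *\<^sub>R (1::complex)) has_integral ((1 - (1-b)^(m+1))/(b*(real m+1))) *\<^sub>R 1) {0..1}"
    by (rule has_integral_scaleR_left[OF poly_int[OF b0]])
  have eq: "(\<Sum>z\<in>vecs q n. I z) = ((1 - (1-b)^(m+1))/(b*(real m+1))) *\<^sub>R 1"
    using S P unfolding pw by (rule has_integral_unique)
  have "(\<Sum>z\<in>vecs q n. omega q ^ inner_q q n x z *
            complex_of_real (1 / (real (q-1) ^ wt n z * real (n choose wt n z)))) =
        complex_of_real (real n + 1) * (\<Sum>z\<in>vecs q n. I z)"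
    unfolding sum_distrib_left I_def r_def
  proof (intro sum.cong refl)
    fix z
    have R: "(real n+1) * (1 / ((real n + 1) * real (n choose wt n z)) * (1 / real (q-1)^wt n z)) =
             1 / (real (q-1) ^ wt n z * real (n choose wt n z))"
      by (simp add: divide_simps)
    have "complex_of_real (real n + 1) * ((1 / ((real n + 1) * real (n choose wt n z)) * (1 / real (q-1) ^ wt n z)) *\<^sub>R omega q ^ inner_q q n x z)
      = complex_of_real ((real n+1) * (1 / ((real n + 1) * real (n choose wt n z)) * (1 / real (q-1)^wt n z))) * omega q ^ inner_q q n x z"
      by (simp only: scaleR_conv_of_real of_real_mult mult.assoc)
    also have "\<dots> = omega q ^ inner_q q n x z * complex_of_real (1 / (real (q-1) ^ wt n z * real (n choose wt n z)))"
      by (subst R) (rule mult.commute)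
    finally show "omega q ^ inner_q q n x z * complex_of_real (1 / (real (q-1) ^ wt n z * real (n choose wt n z))) =
      complex_of_real (real n + 1) * ((1 / ((real n + 1) * real (n choose wt n z)) * (1 / real (q-1) ^ wt n z)) *\<^sub>R omega q ^ inner_q q n x z)" by (rule sym)
  qed
  also have "\<dots> = complex_of_real ((real n + 1) * ((1 - (1-b)^(m+1))/(b*(real m+1))))"
    unfolding eq by (simp add: scaleR_conv_of_real)
  finally show ?thesis unfolding b_def r_def m_def .
qed

lemma real_ident:
  assumes q: "q \<ge> 2"
  shows "real q powr (- real n / 2) * ((real n + 1) * ((1 - (1 - real q / real (q-1)) ^ (m + 1)) /
                    ((real q / real (q-1)) * (real m + 1)))) =
         (real n + 1) * (real q - 1) / real q powr (1 + real n / 2) * (1 / (real m + 1)) *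
         (1 - (-1) ^ (m + 1) / real (q-1) ^ (m + 1))"
proof -
  define r where "r = real (q-1)"
  have r0: "r > 0" using q unfolding r_def by simp
  have rq: "real q - 1 = r" using q unfolding r_def by (simp add: of_nat_diff)
  have qr: "real q = r + 1" using rq by simp
  define Q where "Q = real q powr (real n / 2)"
  have b: "1 - (r+1) / r = -1 / r" using r0 by (simp add: field_simps)
  have qrat: "real q / r = (r+1) / r" unfolding qr ..
  have P1: "real q powr (1 + real n / 2) = (r+1) * Q"
    using q unfolding Q_def qr[symmetric] by (simp add: powr_add)
  have P2: "real q powr (- real n / 2) = 1 / Q"
    unfolding Q_def by (simp add: powr_minus_divide minus_divide_left[symmetric])
  have pos: "Q > 0" using q unfolding Q_def by simp
  have gen: "(1 / Q) * ((real n + 1) * (E / (((r+1) / r) * (real m + 1)))) =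
             (real n + 1) * r / ((r+1) * Q) * (1 / (real m + 1)) * E" for E :: real
    using pos r0 by (simp add: field_simps)
  have pw: "(-1 / r) ^ (m+1) = (-1) ^ (m + 1) / r ^ (m + 1)" by (rule power_divide)
  show ?thesis
    by (simp only: qrat b P1 P2 r_def[symmetric] rq pw gen)
qed

theorem lemma1:
  fixes q n :: nat and f :: "(nat \<Rightarrow> nat) \<Rightarrow> complex"
  assumes "prime q" and "n \<ge> 1"
  shows "(\<Sum>k=0..n. Ahat_k q n f k / (of_nat (q - 1) ^ k * of_nat (n choose k))) =
    of_real ((real n + 1) * (real q - 1) / real q powr (1 + real n / 2)) *
    (\<Sum>m=0..n. A_k q n f m / of_nat (m + 1) *
       (1 - (-1) ^ (m + 1) / of_nat (q - 1) ^ (m + 1)))"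
proof -
  have q: "q \<ge> 2" using assms(1) by (simp add: prime_ge_2_nat)
  define V where "V = vecs q n"
  have finV: "finite V" unfolding V_def vecs_def by (simp add: finite_PiE)
  have wtV: "wt n ` V \<subseteq> {0..n}" using wt_le by auto
  define W where "W = (\<lambda>z. complex_of_real (1 / (real (q-1) ^ wt n z * real (n choose wt n z))))"
  define c0 where "c0 = complex_of_real (real q powr (- real n / 2))"
  define K where "K = (\<lambda>m::nat. complex_of_real ((real n + 1) * ((1 - (1 - real q / real (q-1)) ^ (m + 1)) /
                    ((real q / real (q-1)) * (real m + 1)))))"
  have "(\<Sum>k=0..n. Ahat_k q n f k / (of_nat (q - 1) ^ k * of_nat (n choose k))) =
        (\<Sum>k=0..n. \<Sum>z\<in>{z \<in> V. wt n z = k}. fourier q n f z * W z)"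
    unfolding Ahat_k_def A_k_def V_def W_def
    by (intro sum.cong refl) (simp add: divide_inverse sum_distrib_right)
  also have "\<dots> = (\<Sum>z\<in>V. fourier q n f z * W z)"
    by (rule sum.group[OF finV _ wtV]) simp
  also have "\<dots> = (\<Sum>z\<in>V. c0 * (\<Sum>x\<in>V. f x * omega q ^ inner_q q n x z * W z))"
    unfolding fourier_def c0_def V_def[symmetric]
    by (simp only: sum_distrib_right mult.assoc)
  also have "\<dots> = c0 * (\<Sum>z\<in>V. \<Sum>x\<in>V. f x * omega q ^ inner_q q n x z * W z)"
    by (simp only: sum_distrib_left)
  also have "\<dots> = c0 * (\<Sum>x\<in>V. \<Sum>z\<in>V. f x * omega q ^ inner_q q n x z * W z)"
    by (subst sum.swap) (rule refl)
  also have "\<dots> = c0 * (\<Sum>x\<in>V. f x * (\<Sum>z\<in>V. omega q ^ inner_q q n x z * W z))"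
    by (simp only: sum_distrib_left mult.assoc)
  also have "\<dots> = c0 * (\<Sum>x\<in>V. f x * K (wt n x))"
  proof -
    have "(\<Sum>z\<in>V. omega q ^ inner_q q n x z * W z) = K (wt n x)" if "x \<in> V" for x
      unfolding W_def K_def V_def using kernel[OF q, of x n] that unfolding V_def by blast
    then show ?thesis by (intro arg_cong[where f="\<lambda>s. c0 * s"] sum.cong refl) simp
  qed
  also have "\<dots> = c0 * (\<Sum>m=0..n. \<Sum>x\<in>{x \<in> V. wt n x = m}. f x * K (wt n x))"
    by (subst sum.group[OF finV _ wtV]) simp_all
  also have "\<dots> = c0 * (\<Sum>m=0..n. A_k q n f m * K m)"
    unfolding A_k_def V_def sum_distrib_right by (intro arg_cong[where f="\<lambda>s. c0 * s"] sum.cong refl) auto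
  also have "\<dots> = of_real ((real n + 1) * (real q - 1) / real q powr (1 + real n / 2)) *
    (\<Sum>m=0..n. A_k q n f m / of_nat (m + 1) *
       (1 - (-1) ^ (m + 1) / of_nat (q - 1) ^ (m + 1)))"
    unfolding sum_distrib_left
  proof (intro sum.cong refl)
    fix m
    have E: "(1 - (-1) ^ (m + 1) / of_nat (q - 1) ^ (m + 1) :: complex) =
             complex_of_real (1 - (-1) ^ (m + 1) / real (q-1) ^ (m + 1))" by simp
    have "c0 * (A_k q n f m * K m) = A_k q n f m * complex_of_real (real q powr (- real n / 2) * ((real n + 1) * ((1 - (1 - real q / real (q-1)) ^ (m + 1)) /
                    ((real q / real (q-1)) * (real m + 1)))))"
      unfolding c0_def K_def by (simp only: of_real_mult mult_ac)
    also have "\<dots> = A_k q n f m * complex_of_real ((real n + 1) * (real q - 1) / real q powr (1 + real n / 2) * (1 / (real m + 1)) *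
         (1 - (-1) ^ (m + 1) / real (q-1) ^ (m + 1)))"
      by (simp only: real_ident[OF q])
    also have "\<dots> = of_real ((real n + 1) * (real q - 1) / real q powr (1 + real n / 2)) *
         (A_k q n f m / of_nat (m + 1) * (1 - (-1) ^ (m + 1) / of_nat (q - 1) ^ (m + 1)))"
    proof -
      have F: "complex_of_real (1 / (real m + 1)) = 1 / of_nat (m+1)" by simp
      show ?thesis unfolding E of_real_mult F by (simp only: divide_inverse mult_ac mult_1_left)
    qed
    finally show "c0 * (A_k q n f m * K m) = of_real ((real n + 1) * (real q - 1) / real q powr (1 + real n / 2)) *
         (A_k q n f m / of_nat (m + 1) * (1 - (-1) ^ (m + 1) / of_nat (q - 1) ^ (m + 1)))" .
  qed
  finally show ?thesis .
qed

end
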